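(* Let $(R,\mathfrak m,k)$ be a one-dimensional analytically irreducible local domain with canonical map $k\to\overline R/\mathfrak n$ an isomorphism, with $v,a_i,n,I_i,\mathcal T(R)$ as in the context. Let $n\ge 4$ and $1\le i\le n-3$, and take $q,q'\in R$ with $v(q)=a_i$, $v(q')=a_{i+1}$. For $\alpha\in R$ put $J_\alpha^{(i)}=(q+\alpha q')+I_{i+2}$. Assume $I_iI_{i+2}\ne qI_{i+2}$ and $I_{i+1}I_{i+3}=q'I_{i+3}$. Then: (1) $J^{(i)}_\alpha\in\mathcal T(R)$ for every $\alpha\in R$; (2) if $\alpha,\beta\in R$ with $\alpha-\beta\notin\mathfrak m$, then $J^{(i)}_\alpha\not\supseteq J^{(i)}_\beta$; (3) if $k$ is infinite, then $\mathcal T(R)$ is an infinite set.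
   Context: $\overline R$ is the integral closure of $R$ in $Q(R)$, assumed finitely generated over $R$ and local with maximal ideal $\mathfrak n$; $v$ is the normalized valuation of $\overline R$; $v(R)=\{a_0=0<a_1<\cdots\}$; $n$ is the smallest integer with $a_{n+j}=a_n+j$ for all $j\ge 0$; $I_j=\{r\in R\mid v(r)\ge a_j\}$ for $0\le j\le n$. $\mathcal T(R)$ is the set of nonzero trace ideals of $R$, where a trace ideal is one of the form $\sum_{f\in\mathrm{Hom}_R(M,R)}\mathrm{Im}f$ for some module $M$. *)

theory Defs
  imports "HOL-Algebra.Module" "HOL-Library.Infinite_Set"
begin

text \<open>Setting: R is a subring of a field K (the type 'k), K is the fraction field Q(R).\<close>

definition is_subring :: "'k::field set \<Rightarrow> bool" where
  "is_subring R \<longleftrightarrow> 0 \<in> R \<and> 1 \<in> R \<and>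
     (\<forall>x\<in>R. \<forall>y\<in>R. x + y \<in> R \<and> x - y \<in> R \<and> x * y \<in> R)"

definition is_frac_field_of :: "'k::field set \<Rightarrow> bool" where
  "is_frac_field_of R \<longleftrightarrow> (\<forall>x::'k. \<exists>a\<in>R. \<exists>b\<in>R. b \<noteq> 0 \<and> x = a / b)"

definition integral_over :: "'k::field set \<Rightarrow> 'k \<Rightarrow> bool" where
  "integral_over R x \<longleftrightarrow>
     (\<exists>(d::nat) c. (\<forall>i<d. c i \<in> R) \<and> x ^ d + (\<Sum>i<d. c i * x ^ i) = 0)"

definition int_closure :: "'k::field set \<Rightarrow> 'k set" where
  "int_closure R = {x. integral_over R x}"

definition fin_gen_over :: "'k::field set \<Rightarrow> 'k set \<Rightarrow> bool" where
  "fin_gen_over R S \<longleftrightarrow>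
     (\<exists>G. finite G \<and> S = {x. \<exists>c. (\<forall>g\<in>G. c g \<in> R) \<and> x = (\<Sum>g\<in>G. c g * g)})"

text \<open>v is the normalized (discrete, surjective onto the integers) valuation of K whose
  valuation ring is the given set V (the value of v at 0 is irrelevant; 0 has value infinity).\<close>
definition normalized_valuation_of :: "'k::field set \<Rightarrow> ('k \<Rightarrow> int) \<Rightarrow> bool" where
  "normalized_valuation_of V v \<longleftrightarrow>
     (\<forall>x y. x \<noteq> 0 \<longrightarrow> y \<noteq> 0 \<longrightarrow> v (x * y) = v x + v y) \<and>
     (\<forall>x y. x \<noteq> 0 \<longrightarrow> y \<noteq> 0 \<longrightarrow> x + y \<noteq> 0 \<longrightarrow> min (v x) (v y) \<le> v (x + y)) \<and>
     (\<forall>z. \<exists>x. x \<noteq> 0 \<and> v x = z) \<and>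
     V = {x. x = 0 \<or> 0 \<le> v x}"

definition val_maxideal :: "('k::field \<Rightarrow> int) \<Rightarrow> 'k set" where
  "val_maxideal v = {x. x = 0 \<or> 0 < v x}"

definition maxideal :: "'k::field set \<Rightarrow> 'k set" where
  "maxideal R = {r \<in> R. \<not> (\<exists>s\<in>R. r * s = 1)}"

definition residue_field :: "'k::field set \<Rightarrow> 'k set set" where
  "residue_field R = (\<lambda>r. {s \<in> R. r - s \<in> maxideal R}) ` R"

text \<open>The canonical map k \<rightarrow> Rbar/n is surjective (it is automatically injective).\<close>
definition residue_iso :: "'k::field set \<Rightarrow> ('k \<Rightarrow> int) \<Rightarrow> bool" where
  "residue_iso R v \<longleftrightarrow> (\<forall>x\<in>int_closure R. \<exists>r\<in>R. x - r \<in> val_maxideal v)"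

text \<open>Value semigroup v(R) and its increasing enumeration a_0 = 0 < a_1 < ...\<close>
definition valsemi :: "'k::field set \<Rightarrow> ('k \<Rightarrow> int) \<Rightarrow> int set" where
  "valsemi R v = {v r | r. r \<in> R \<and> r \<noteq> 0}"

definition aseq :: "'k::field set \<Rightarrow> ('k \<Rightarrow> int) \<Rightarrow> nat \<Rightarrow> int" where
  "aseq R v j = int (enumerate (nat ` valsemi R v) j)"

definition cond_index :: "'k::field set \<Rightarrow> ('k \<Rightarrow> int) \<Rightarrow> nat" where
  "cond_index R v = (LEAST n. \<forall>j. aseq R v (n + j) = aseq R v n + int j)"

definition Iideal :: "'k::field set \<Rightarrow> ('k \<Rightarrow> int) \<Rightarrow> nat \<Rightarrow> 'k set" where
  "Iideal R v j = {r \<in> R. r = 0 \<or> aseq R v j \<le> v r}"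

definition ideal_prod :: "'k::field set \<Rightarrow> 'k set \<Rightarrow> 'k set" where
  "ideal_prod I J = {x. \<exists>(N::nat) f g. (\<forall>k<N. f k \<in> I \<and> g k \<in> J) \<and> x = (\<Sum>k<N. f k * g k)}"

definition elt_times :: "'k::field \<Rightarrow> 'k set \<Rightarrow> 'k set" where
  "elt_times q I = {q * x | x. x \<in> I}"

definition plus_principal :: "'k::field set \<Rightarrow> 'k \<Rightarrow> 'k set \<Rightarrow> 'k set" where
  "plus_principal R x I = {r * x + y | r y. r \<in> R \<and> y \<in> I}"

definition ringR :: "'k::field set \<Rightarrow> 'k ring" where
  "ringR R = \<lparr>carrier = R, monoid.mult = (*), one = 1, zero = 0, add = (+)\<rparr>"

definition lin_to_R :: "'k::field set \<Rightarrow> ('k, 'm) module \<Rightarrow> ('m \<Rightarrow> 'k) \<Rightarrow> bool" where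
  "lin_to_R R M f \<longleftrightarrow>
     (\<forall>x\<in>carrier M. f x \<in> R) \<and>
     (\<forall>x\<in>carrier M. \<forall>y\<in>carrier M. f (x \<oplus>\<^bsub>M\<^esub> y) = f x + f y) \<and>
     (\<forall>a\<in>R. \<forall>x\<in>carrier M. f (a \<odot>\<^bsub>M\<^esub> x) = a * f x)"

definition trace_of :: "'k::field set \<Rightarrow> ('k, 'm) module \<Rightarrow> 'k set" where
  "trace_of R M = {t. \<exists>(N::nat) f x. (\<forall>k<N. lin_to_R R M (f k) \<and> x k \<in> carrier M) \<and>
                        t = (\<Sum>k<N. f k (x k))}"

text \<open>Trace ideals: traces of R-modules (with carrier in the type 'm, fixed via the
  itself-argument).\<close>
definition is_trace_ideal :: "'m itself \<Rightarrow> 'k::field set \<Rightarrow> 'k set \<Rightarrow> bool" where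
  "is_trace_ideal _ R I \<longleftrightarrow> (\<exists>M :: ('k, 'm) module. module (ringR R) M \<and> I = trace_of R M)"

text \<open>T(R): the nonzero trace ideals, using modules with carrier in 'k (every trace ideal I
  is the trace of the module I itself, so this is all of T(R)).\<close>
definition trace_ideals :: "'k::field set \<Rightarrow> 'k set set" where
  "trace_ideals R = {I. is_trace_ideal TYPE('k) R I \<and> I \<noteq> {0}}"

end

theory Submission
  imports Defs
begin


locale setting =
  fixes R :: "'k::field set" and v :: "'k \<Rightarrow> int"
  assumes subring: "is_subring R"
    and fracfield: "is_frac_field_of R"
    and fingen: "fin_gen_over R (int_closure R)"
    and val: "normalized_valuation_of (int_closure R) v"
    and residue: "residue_iso R v"
begin

lemma R0[simp]: "0 \<in> R" using subring unfolding is_subring_def by auto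
lemma R1[simp]: "1 \<in> R" using subring unfolding is_subring_def by auto
lemma Radd[intro]: "x \<in> R \<Longrightarrow> y \<in> R \<Longrightarrow> x + y \<in> R" using subring unfolding is_subring_def by auto
lemma Rdiff[intro]: "x \<in> R \<Longrightarrow> y \<in> R \<Longrightarrow> x - y \<in> R" using subring unfolding is_subring_def by auto
lemma Rmult[intro]: "x \<in> R \<Longrightarrow> y \<in> R \<Longrightarrow> x * y \<in> R" using subring unfolding is_subring_def by auto
lemma Rminus[intro]: "x \<in> R \<Longrightarrow> - x \<in> R" using Rdiff[of 0 x] by simp
lemma Rpow[intro]: "x \<in> R \<Longrightarrow> x ^ (k::nat) \<in> R" by (induct k) auto
lemma Rsum[intro]: "(\<And>k. k < (N::nat) \<Longrightarrow> f k \<in> R) \<Longrightarrow> (\<Sum>k<N. f k) \<in> R"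
  by (induct N) auto

lemma v_mult: "x \<noteq> 0 \<Longrightarrow> y \<noteq> 0 \<Longrightarrow> v (x * y) = v x + v y"
  using val unfolding normalized_valuation_of_def by blast
lemma v_add: "x \<noteq> 0 \<Longrightarrow> y \<noteq> 0 \<Longrightarrow> x + y \<noteq> 0 \<Longrightarrow> min (v x) (v y) \<le> v (x + y)"
  using val unfolding normalized_valuation_of_def by blast
lemma v_surj: "\<exists>x. x \<noteq> 0 \<and> v x = z"
  using val unfolding normalized_valuation_of_def by blast
lemma Rbar_iff: "x \<in> int_closure R \<longleftrightarrow> x = 0 \<or> 0 \<le> v x"
  using val unfolding normalized_valuation_of_def by blast

lemma v_one[simp]: "v 1 = 0"
  using v_mult[of 1 1] by simp

lemma v_inverse: "x \<noteq> 0 \<Longrightarrow> v (inverse x) = - v x"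
  using v_mult[of x "inverse x"] by simp

lemma v_m1: "v (-1) = 0"
  using v_mult[of "-1" "-1"] by simp

lemma v_minus[simp]: "v (- x) = v x"
proof (cases "x = 0")
  case False
  then show ?thesis using v_mult[of "-1" x] v_m1 by simp
qed simp

lemma v_diff: "x \<noteq> 0 \<Longrightarrow> y \<noteq> 0 \<Longrightarrow> x - y \<noteq> 0 \<Longrightarrow> min (v x) (v y) \<le> v (x - y)"
  using v_add[of x "-y"] by simp

lemma v_divide: "x \<noteq> 0 \<Longrightarrow> y \<noteq> 0 \<Longrightarrow> v (x / y) = v x - v y"
  using v_mult[of x "inverse y"] v_inverse[of y] by (simp add: divide_inverse)

lemma v_pow: "x \<noteq> 0 \<Longrightarrow> v (x ^ k) = int k * v x"
  by (induct k) (auto simp: v_mult algebra_simps)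

lemma v_strict: assumes "x \<noteq> 0" "y = 0 \<or> v x < v y" shows "x + y \<noteq> 0 \<and> v (x + y) = v x"
proof (cases "y = 0")
  case False
  with assms have lt: "v x < v y" by auto
  have ne: "x + y \<noteq> 0"
  proof
    assume "x + y = 0" then have "y = - x" by (metis add.commute eq_neg_iff_add_eq_0)
    then show False using lt by simp
  qed
  have "min (v x) (v y) \<le> v (x + y)" using v_add[OF assms(1) False ne] .
  then have ge: "v x \<le> v (x + y)" using lt by simp
  have "min (v (x + y)) (v y) \<le> v ((x + y) - y)" using v_diff[OF ne False] assms(1) by simp
  then have "v (x + y) \<le> v x" using lt by (simp add: min_def split: if_splits)
  with ge ne show ?thesis by simp
qed (use assms in simp)

lemma R_Rbar: "r \<in> R \<Longrightarrow> r \<in> int_closure R"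
  unfolding int_closure_def integral_over_def
  by (rule CollectI, rule exI[of _ 1], rule exI[of _ "\<lambda>_. - r"]) auto

lemma v_R: "r \<in> R \<Longrightarrow> r \<noteq> 0 \<Longrightarrow> 0 \<le> v r"
  using R_Rbar Rbar_iff by blast

lemma integral_of_v: "x = 0 \<or> 0 \<le> v x \<Longrightarrow> integral_over R x"
  using Rbar_iff unfolding int_closure_def by blast

lemma inv_closed:
  assumes A0: "0 \<in> A" and Aadd: "\<And>x y. x \<in> A \<Longrightarrow> y \<in> A \<Longrightarrow> x + y \<in> A"
    and Amul: "\<And>r x. r \<in> R \<Longrightarrow> x \<in> A \<Longrightarrow> r * x \<in> A"
    and e: "\<And>x. x \<in> A \<Longrightarrow> e * x \<in> A" and ne: "e \<noteq> 0"
    and int: "integral_over R (inverse e)"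
    and x: "x \<in> A"
  shows "inverse e * x \<in> A"
proof -
  obtain d c where c: "\<forall>k<d. c k \<in> R" and eq: "inverse e ^ d + (\<Sum>k<d. c k * inverse e ^ k) = 0"
    using int unfolding integral_over_def by blast
  show ?thesis
  proof (cases d)
    case 0
    then show ?thesis using eq by simp
  next
    case (Suc m)
    let ?y = "inverse e"
    have pw: "?y ^ k * e ^ m = e ^ (m - k)" if "k \<le> m" for k
    proof -
      have "e ^ m = e ^ (m - k) * e ^ k" using that by (simp add: power_add[symmetric])
      then show ?thesis using ne by (simp add: power_inverse field_simps)
    qed
    have "(?y ^ d + (\<Sum>k<d. c k * ?y ^ k)) * e ^ m = 0" using eq by simp
    then have "?y ^ d * e ^ m + (\<Sum>k<d. c k * (?y ^ k * e ^ m)) = 0"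
      by (simp add: distrib_right sum_distrib_right mult.assoc)
    moreover have "?y ^ d * e ^ m = ?y" using Suc pw[of m] by simp
    moreover have "(\<Sum>k<d. c k * (?y ^ k * e ^ m)) = (\<Sum>k<d. c k * e ^ (m - k))"
      using Suc pw by (intro sum.cong) auto
    ultimately have yeq: "?y = - (\<Sum>k<d. c k * e ^ (m - k))" by (simp add: eq_neg_iff_add_eq_0)
    have pA: "e ^ j * x \<in> A" for j
      by (induct j) (use x e in \<open>auto simp: mult.assoc\<close>)
    have sA: "(\<Sum>k<N. c k * (e ^ (m - k) * x)) \<in> A" if "N \<le> d" for N
      using that
    proof (induct N)
      case 0 then show ?case using A0 by simp
    next
      case (Suc N)
      then show ?case using Aadd Amul c pA by simp
    qed
    have "?y * x = (-1) * (\<Sum>k<d. c k * (e ^ (m - k) * x))"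
      by (simp add: yeq sum_distrib_right mult.assoc)
    also have "\<dots> \<in> A" using Amul[OF Rminus[OF R1]] sA[of d] by simp
    finally show ?thesis .
  qed
qed

lemma unit_inverse: assumes "r \<in> R" "r \<noteq> 0" "v r = 0" shows "inverse r \<in> R"
  using inv_closed[of R r 1] assms integral_of_v[of "inverse r"] v_inverse[of r] by auto

lemma maxideal_iff: "x \<in> maxideal R \<longleftrightarrow> x \<in> R \<and> (x = 0 \<or> 0 < v x)"
proof
  assume "x \<in> maxideal R"
  then have x: "x \<in> R" and nu: "\<not> (\<exists>s\<in>R. x * s = 1)" unfolding maxideal_def by auto
  show "x \<in> R \<and> (x = 0 \<or> 0 < v x)"
  proof (rule ccontr)
    assume "\<not> ?thesis"
    with x have "x \<noteq> 0" "v x = 0" using v_R[OF x] by auto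
    then show False using nu unit_inverse[OF x] by auto
  qed
next
  assume a: "x \<in> R \<and> (x = 0 \<or> 0 < v x)"
  show "x \<in> maxideal R" unfolding maxideal_def
  proof (safe)
    show "x \<in> R" using a by simp
    fix s assume s: "s \<in> R" "x * s = 1"
    then have "x \<noteq> 0" "s \<noteq> 0" by auto
    then have "v x + v s = 0" using v_mult[of x s] s by simp
    then show False using a v_R[OF s(1) \<open>s\<noteq>0\<close>] \<open>x\<noteq>0\<close> by simp
  qed
qed

end



context setting
begin

abbreviation "S \<equiv> valsemi R v"
abbreviation "T \<equiv> nat ` valsemi R v"
abbreviation "aa \<equiv> aseq R v"

lemma S_iff: "s \<in> S \<longleftrightarrow> (\<exists>r. r \<in> R \<and> r \<noteq> 0 \<and> v r = s)"
  unfolding valsemi_def by auto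

lemma S_nonneg: "s \<in> S \<Longrightarrow> 0 \<le> s"
  using S_iff v_R by auto

lemma vR_S: "r \<in> R \<Longrightarrow> r \<noteq> 0 \<Longrightarrow> v r \<in> S"
  using S_iff by auto

lemma pos_elem: "\<exists>r\<in>R. r \<noteq> 0 \<and> 0 < v r"
proof -
  obtain x where x: "x \<noteq> 0" "v x = 1" using v_surj by blast
  obtain p b where pb: "p \<in> R" "b \<in> R" "b \<noteq> 0" "x = p / b"
    using fracfield unfolding is_frac_field_of_def by blast
  then have "p \<noteq> 0" using x by auto
  then have "v x = v p - v b" using pb v_divide by simp
  then show ?thesis using pb \<open>p \<noteq> 0\<close> x v_R[of b] by (intro bexI[of _ p]) auto
qed

lemma T_inf: "infinite T"
proof -
  obtain r where r: "r \<in> R" "r \<noteq> 0" "0 < v r" using pos_elem by blast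
  show ?thesis unfolding infinite_nat_iff_unbounded_le
  proof
    fix m :: nat
    have "r ^ m \<in> R" "r ^ m \<noteq> 0" using r by auto
    then have "v (r ^ m) \<in> S" by (rule vR_S)
    moreover have "v (r ^ m) = int m * v r" using v_pow r by simp
    moreover have "int m * v r \<ge> int m" using r(3) by (simp add: mult_le_cancel_left1)
    ultimately show "\<exists>n\<ge>m. n \<in> T" by (intro exI[of _ "nat (int m * v r)"]) auto
  qed
qed

lemma a_def': "aa j = int (enumerate T j)"
  unfolding aseq_def ..

lemma a_in_S: "aa j \<in> S"
proof -
  have "enumerate T j \<in> T" using enumerate_in_set[OF T_inf] .
  then obtain s where "s \<in> S" "enumerate T j = nat s" by auto
  then show ?thesis using S_nonneg[of s] a_def' by simp
qed

lemma a_less_iff: "aa j < aa k \<longleftrightarrow> j < k"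
  using a_def' enumerate_mono_iff[OF T_inf] by simp

lemma a_le_iff: "aa j \<le> aa k \<longleftrightarrow> j \<le> k"
  using a_def' enumerate_mono_le_iff[OF T_inf] by simp

lemma S_a: "s \<in> S \<Longrightarrow> \<exists>k. aa k = s"
proof -
  assume s: "s \<in> S"
  then have "nat s \<in> T" by auto
  then obtain k where "enumerate T k = nat s" using enumerate_Ex[OF T_inf] by blast
  then show ?thesis using S_nonneg[OF s] a_def' by (intro exI[of _ k]) simp
qed

lemma a_next: "s \<in> S \<Longrightarrow> aa j < s \<Longrightarrow> aa (Suc j) \<le> s"
  using S_a a_less_iff a_le_iff by (metis Suc_leI)

lemma a_ge: "int j \<le> aa j"
  using a_def' le_enumerate[OF T_inf, of j] by simp

lemma Rprod: "finite G \<Longrightarrow> (\<forall>g\<in>G. f g \<in> R) \<Longrightarrow> prod f G \<in> R"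
  by (induct G rule: finite_induct) auto

lemma Rsumset: "finite G \<Longrightarrow> (\<forall>g\<in>G. f g \<in> R) \<Longrightarrow> sum f G \<in> R"
  by (induct G rule: finite_induct) auto

lemma conductor: "\<exists>s0\<in>R. s0 \<noteq> 0 \<and> (\<forall>x\<in>int_closure R. s0 * x \<in> R)"
proof -
  obtain G where G: "finite G"
    "int_closure R = {x. \<exists>c. (\<forall>g\<in>G. c g \<in> R) \<and> x = (\<Sum>g\<in>G. c g * g)}"
    using fingen unfolding fin_gen_over_def by blast
  have "\<forall>x. \<exists>p. fst p \<in> R \<and> snd p \<in> R \<and> snd p \<noteq> 0 \<and> x = fst p / snd p"
  proof
    fix x
    obtain p b where "p \<in> R" "b \<in> R" "b \<noteq> 0" "x = p / b"
      using fracfield unfolding is_frac_field_of_def by blast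
    then show "\<exists>p. fst p \<in> R \<and> snd p \<in> R \<and> snd p \<noteq> 0 \<and> x = fst p / snd p"
      by (intro exI[of _ "(p, b)"]) simp
  qed
  then obtain AB where AB: "\<And>x. fst (AB x) \<in> R \<and> snd (AB x) \<in> R \<and> snd (AB x) \<noteq> 0 \<and> x = fst (AB x) / snd (AB x)"
    by (rule choice[THEN exE]) blast
  define B where "B x = snd (AB x)" for x
  define A where "A x = fst (AB x)" for x
  have A: "A x \<in> R" "B x \<in> R" "B x \<noteq> 0" for x using AB[of x] unfolding A_def B_def by blast+
  have Aeq: "x = A x / B x" for x using AB[of x] unfolding A_def B_def by blast
  define s0 where "s0 = prod B G"
  have s0R: "s0 \<in> R" unfolding s0_def using Rprod[OF G(1)] A by auto
  have s0ne: "s0 \<noteq> 0" unfolding s0_def using G(1) A(3) by simp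
  have sg: "s0 * g \<in> R" if "g \<in> G" for g
  proof -
    have "s0 = B g * prod B (G - {g})" unfolding s0_def using prod.remove[OF G(1) that] by simp
    moreover have "B g * g = A g" using A(3)[of g] Aeq[of g] by (metis nonzero_mult_div_cancel_left times_divide_eq_right)
    ultimately have "s0 * g = A g * prod B (G - {g})" by (metis mult.commute mult.left_commute)
    then show ?thesis using Rprod[of "G - {g}" B] G(1) A by auto
  qed
  have "\<forall>x\<in>int_closure R. s0 * x \<in> R"
  proof
    fix x assume "x \<in> int_closure R"
    then obtain c where c: "\<forall>g\<in>G. c g \<in> R" "x = (\<Sum>g\<in>G. c g * g)" using G(2) by auto
    have "s0 * x = (\<Sum>g\<in>G. c g * (s0 * g))" using c(2) by (simp add: sum_distrib_left mult.left_commute)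
    also have "\<dots> \<in> R" by (rule Rsumset[OF G(1)]) (use c(1) sg Rmult in blast)
    finally show "s0 * x \<in> R" .
  qed
  then show ?thesis using s0R s0ne by blast
qed

lemma S_big: "\<exists>c0\<ge>0. \<forall>m\<ge>c0. m \<in> S"
proof -
  obtain s0 where s0: "s0 \<in> R" "s0 \<noteq> 0" "\<forall>x\<in>int_closure R. s0 * x \<in> R" using conductor by blast
  have "\<forall>m\<ge>v s0. m \<in> S"
  proof (intro allI impI)
    fix m assume m: "v s0 \<le> m"
    obtain x where x: "x \<noteq> 0" "v x = m - v s0" using v_surj by blast
    then have "x \<in> int_closure R" using m Rbar_iff by simp
    then have "s0 * x \<in> R" using s0 by blast
    moreover have "v (s0 * x) = m" using v_mult[OF s0(2) x(1)] x by simp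
    ultimately show "m \<in> S" using vR_S[of "s0 * x"] s0 x by simp
  qed
  then show ?thesis using v_R[OF s0(1,2)] by blast
qed

abbreviation "nn \<equiv> cond_index R v"

lemma cond_ex: "\<exists>n. \<forall>j. aa (n + j) = aa n + int j"
proof -
  obtain c0 where c0: "c0 \<ge> 0" "\<forall>m\<ge>c0. m \<in> S" using S_big by blast
  define n where "n = nat c0"
  have an: "aa n \<ge> c0" using a_ge[of n] c0 n_def by simp
  have "aa (n + j) = aa n + int j" for j
  proof (induct j)
    case (Suc j)
    have "aa (n + j) < aa (Suc (n + j))" using a_less_iff by simp
    moreover have "aa (Suc (n + j)) \<le> aa (n + j) + 1"
      using a_next[of "aa (n+j) + 1" "n + j"] c0(2) an Suc by simp
    ultimately show ?case using Suc by simp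
  qed simp
  then show ?thesis by blast
qed

lemma cond_prop: "aa (nn + j) = aa nn + int j"
  using LeastI_ex[OF cond_ex] unfolding cond_index_def by blast

lemma big_S: "m \<ge> aa nn \<Longrightarrow> m \<in> S"
  using cond_prop[of "nat (m - aa nn)"] a_in_S[of "nn + nat (m - aa nn)"] by simp

lemma cond_min: assumes "0 < nn" shows "aa nn - 1 \<notin> S"
proof
  assume s: "aa nn - 1 \<in> S"
  have lt: "aa (nn - 1) < aa nn" using assms a_less_iff by simp
  have "aa (Suc (nn - 1)) \<le> aa nn - 1 \<or> aa nn - 1 \<le> aa (nn - 1)"
  proof (cases "aa (nn - 1) < aa nn - 1")
    case True then show ?thesis using a_next[OF s] by blast
  qed simp
  then have eq: "aa (nn - 1) = aa nn - 1" using lt assms by auto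
  have "\<forall>j. aa (nn - 1 + j) = aa (nn - 1) + int j"
  proof
    fix j show "aa (nn - 1 + j) = aa (nn - 1) + int j"
    proof (cases j)
      case (Suc j')
      then have "nn - 1 + j = nn + j'" using assms by simp
      then show ?thesis using cond_prop[of j'] eq Suc by simp
    qed simp
  qed
  then have "nn \<le> nn - 1" unfolding cond_index_def by (rule Least_le)
  then show False using assms by simp
qed

end



context setting
begin

abbreviation "I j \<equiv> Iideal R v j"

lemma I_iff: "x \<in> I j \<longleftrightarrow> x \<in> R \<and> (x = 0 \<or> aa j \<le> v x)"
  unfolding Iideal_def by auto

lemma I_R: "x \<in> I j \<Longrightarrow> x \<in> R" using I_iff by auto
lemma I_0[simp]: "0 \<in> I j" using I_iff by auto

lemma I_add: assumes "x \<in> I j" "y \<in> I j" shows "x + y \<in> I j"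
proof -
  have R: "x + y \<in> R" using assms I_R by auto
  show ?thesis
  proof (cases "x = 0 \<or> y = 0 \<or> x + y = 0")
    case True then show ?thesis using assms by auto
  next
    case False
    then have "min (v x) (v y) \<le> v (x + y)" using v_add by auto
    then show ?thesis using assms False R I_iff by auto
  qed
qed

lemma I_mult: assumes "r \<in> R" "x \<in> I j" shows "r * x \<in> I j"
proof (cases "r = 0 \<or> x = 0")
  case False
  then have "v (r * x) = v r + v x" using v_mult by auto
  moreover have "0 \<le> v r" using v_R assms False by auto
  ultimately show ?thesis using assms False I_iff by auto
qed (use assms I_iff in auto)

lemma I_mult': "r \<in> R \<Longrightarrow> x \<in> I j \<Longrightarrow> x * r \<in> I j"
  using I_mult by (simp add: mult.commute)

lemma I_minus: "x \<in> I j \<Longrightarrow> - x \<in> I j"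
  using I_mult[of "-1" x j] Rminus[OF R1] by simp

lemma I_diff: "x \<in> I j \<Longrightarrow> y \<in> I j \<Longrightarrow> x - y \<in> I j"
  using I_add[of x j "- y"] I_minus by simp

lemma I_mono: "j \<le> k \<Longrightarrow> x \<in> I k \<Longrightarrow> x \<in> I j"
  using I_iff a_le_iff by (meson order_trans)

lemma I_gt: "x \<in> R \<Longrightarrow> x \<noteq> 0 \<Longrightarrow> aa j < v x \<Longrightarrow> x \<in> I (Suc j)"
  using I_iff a_next vR_S by blast

lemma decomp:
  assumes Q: "Q \<in> R" "Q \<noteq> 0" "v Q = aa j" and x: "x \<in> I j"
  shows "\<exists>r\<in>R. x - r * Q \<in> I (Suc j)"
proof (cases "x = 0")
  case True then show ?thesis by (intro bexI[of _ 0]) auto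
next
  case False
  then have xR: "x \<in> R" and vx: "aa j \<le> v x" using x I_iff by auto
  show ?thesis
  proof (cases "aa j < v x")
    case True then show ?thesis using I_gt[OF xR False] by (intro bexI[of _ 0]) auto
  next
    case eq: False
    then have "v (x / Q) = 0" using v_divide[OF False Q(2)] vx Q by simp
    then have "x / Q \<in> int_closure R" using Rbar_iff by simp
    then obtain r where r: "r \<in> R" "x / Q - r \<in> val_maxideal v"
      using residue unfolding residue_iso_def by blast
    have xr: "x - r * Q = (x / Q - r) * Q" using Q(2) by (simp add: field_simps)
    have "x - r * Q \<in> I (Suc j)"
    proof (cases "x / Q - r = 0")
      case True then show ?thesis using xr by simp
    next
      case ne: False
      then have "0 < v (x / Q - r)" using r(2) unfolding val_maxideal_def by simp
      then have "aa j < v (x - r * Q)" using xr v_mult[OF ne Q(2)] Q by simp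
      moreover have "x - r * Q \<noteq> 0" using xr ne Q by simp
      ultimately show ?thesis using I_gt xR r Q by blast
    qed
    then show ?thesis using r by blast
  qed
qed

lemma inv_closed_I:
  assumes "\<And>x. x \<in> I j \<Longrightarrow> e * x \<in> I j" "e \<noteq> 0" "v e = 0" "x \<in> I j"
  shows "inverse e * x \<in> I j"
  using inv_closed[of "I j" e x] assms I_add I_mult integral_of_v[of "inverse e"] v_inverse[of e]
  by auto

lemma maxideal_diff: "x \<in> maxideal R \<Longrightarrow> y \<in> maxideal R \<Longrightarrow> x - y \<in> maxideal R"
proof -
  assume x: "x \<in> maxideal R" and y: "y \<in> maxideal R"
  then have xy: "x \<in> R" "y \<in> R" by (auto simp: maxideal_iff)
  show ?thesis
  proof (cases "x = 0 \<or> y = 0 \<or> x - y = 0")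
    case True then show ?thesis using x y xy by (auto simp: maxideal_iff)
  next
    case False
    then show ?thesis using v_diff[of x y] x y xy by (auto simp: maxideal_iff)
  qed
qed

end




locale main = setting +
  fixes i :: nat and q q' :: 'a
  assumes n4: "cond_index R v \<ge> 4"
    and i1: "1 \<le> i" and i2: "i \<le> cond_index R v - 3"
    and qR: "q \<in> R" and q0: "q \<noteq> 0" and vq: "v q = aseq R v i"
    and q'R: "q' \<in> R" and q'0: "q' \<noteq> 0" and vq': "v q' = aseq R v (i + 1)"
    and hyp1: "ideal_prod (Iideal R v i) (Iideal R v (i + 2)) \<noteq> elt_times q (Iideal R v (i + 2))"
    and hyp2: "ideal_prod (Iideal R v (i + 1)) (Iideal R v (i + 3)) = elt_times q' (Iideal R v (i + 3))"
begin

lemma hyp2': assumes "y \<in> I (i+1)" "x \<in> I (i+3)" shows "(y / q') * x \<in> I (i+3)"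
proof -
  have "y * x \<in> ideal_prod (I (i+1)) (I (i+3))"
    unfolding ideal_prod_def using assms
    by (intro CollectI exI[of _ "1::nat"] exI[of _ "\<lambda>_. y"] exI[of _ "\<lambda>_. x"]) auto
  then obtain z where "z \<in> I (i+3)" "y * x = q' * z" using hyp2 unfolding elt_times_def by auto
  then show ?thesis using q'0 by (simp add: field_simps)
qed

lemma prod_sub:
  assumes "\<forall>y1\<in>I i. \<forall>x2\<in>I (i+2). \<exists>t\<in>I (i+2). y1 * x2 = P * t"
  shows "ideal_prod (I i) (I (i+2)) \<subseteq> elt_times P (I (i+2))"
proof
  fix z assume "z \<in> ideal_prod (I i) (I (i+2))"
  then obtain N :: nat and f g where fg: "\<forall>k<N. f k \<in> I i \<and> g k \<in> I (i+2)" "z = (\<Sum>k<N. f k * g k)"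
    unfolding ideal_prod_def by blast
  have "\<exists>t\<in>I (i+2). (\<Sum>k<M. f k * g k) = P * t" if "M \<le> N" for M
    using that
  proof (induct M)
    case 0 then show ?case by (intro bexI[of _ 0]) auto
  next
    case (Suc M)
    then obtain t where t: "t \<in> I (i+2)" "(\<Sum>k<M. f k * g k) = P * t" by auto
    have "f M \<in> I i" "g M \<in> I (i+2)" using fg(1) Suc(2) by auto
    then obtain t' where t': "t' \<in> I (i+2)" "f M * g M = P * t'" using assms by blast
    show ?case using t t' I_add by (intro bexI[of _ "t + t'"]) (auto simp: distrib_left)
  qed
  then show "z \<in> elt_times P (I (i+2))" using fg unfolding elt_times_def by auto
qed

lemma q_indep:
  assumes P: "P \<in> R" "P \<noteq> 0" "v P = aa i"
    and H: "\<forall>y1\<in>I i. \<forall>x2\<in>I (i+2). \<exists>t\<in>I (i+2). y1 * x2 = P * t"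
  shows "\<forall>y1\<in>I i. \<forall>x2\<in>I (i+2). \<exists>t\<in>I (i+2). y1 * x2 = q * t"
proof (intro ballI)
  fix y1 x2 assume y1: "y1 \<in> I i" and x2: "x2 \<in> I (i+2)"
  have qI: "q \<in> I i" using qR vq I_iff by auto
  have e: "(q / P) * x \<in> I (i+2)" if xx: "x \<in> I (i+2)" for x
  proof -
    obtain t where "t \<in> I (i+2)" "q * x = P * t" using bspec[OF bspec[OF H qI] xx] by blast
    then show ?thesis using P by (simp add: field_simps)
  qed
  have ve: "v (q / P) = 0" using v_divide[OF q0 P(2)] vq P by simp
  have qP: "q / P \<noteq> 0" using q0 P by simp
  obtain t where t: "t \<in> I (i+2)" "y1 * x2 = P * t" using bspec[OF bspec[OF H y1] x2] by blast
  have "inverse (q / P) * t \<in> I (i+2)" using inv_closed_I[OF e qP ve t(1)] by blast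
  moreover have "y1 * x2 = q * (inverse (q / P) * t)" using t(2) q0 P by (simp add: field_simps)
  ultimately show "\<exists>t\<in>I (i+2). y1 * x2 = q * t" by blast
qed

lemma no_q:
  assumes "\<forall>y1\<in>I i. \<forall>x2\<in>I (i+2). \<exists>t\<in>I (i+2). y1 * x2 = q * t"
  shows False
proof -
  have "ideal_prod (I i) (I (i+2)) \<subseteq> elt_times q (I (i+2))" using prod_sub assms by blast
  moreover have "elt_times q (I (i+2)) \<subseteq> ideal_prod (I i) (I (i+2))"
  proof
    fix z assume "z \<in> elt_times q (I (i+2))"
    then obtain x where x: "x \<in> I (i+2)" "z = q * x" unfolding elt_times_def by auto
    have qI: "q \<in> I i" using qR vq I_iff by auto
    show "z \<in> ideal_prod (I i) (I (i+2))"
      unfolding ideal_prod_def using x qI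
      by (intro CollectI exI[of _ "1::nat"] exI[of _ "\<lambda>_. q"] exI[of _ "\<lambda>_. x"]) auto
  qed
  ultimately show False using hyp1 by blast
qed

lemma keyL:
  assumes P: "P \<in> R" "P \<noteq> 0" "v P = aa i"
    and w: "w \<noteq> 0" "0 < v w" "\<forall>x\<in>I (i+2). w * x \<in> R"
    and u: "u \<in> R" "u \<noteq> 0" "v u = 0"
    and X: "w * P - u * q' \<in> I (i+2)"
  shows False
proof -
  define X where "X = w * P - u * q'"
  have XI: "X \<in> I (i+2)" using X X_def by simp
  have wx: "w * x1 \<in> I (i+3)" if "x1 \<in> I (i+2)" for x1
  proof (cases "x1 = 0")
    case False
    have R: "w * x1 \<in> R" using w that by auto
    have "v (w * x1) = v w + v x1" using v_mult[OF w(1) False] .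
    moreover have "aa (i+2) \<le> v x1" using that False I_iff by auto
    ultimately have "aa (i+2) < v (w * x1)" using w by simp
    then show ?thesis using I_gt[OF R] w(1) False by (simp add: numeral_3_eq_3)
  qed simp
  define g' where "g' = u + X / q'"
  have g'F: "g' * z \<in> I (i+3)" if z: "z \<in> I (i+3)" for z
  proof -
    have "(X / q') * z \<in> I (i+3)" using hyp2'[OF I_mono[OF _ XI] z] by simp
    moreover have "u * z \<in> I (i+3)" using I_mult u z by blast
    ultimately show ?thesis unfolding g'_def using I_add by (simp add: distrib_right)
  qed
  have wP: "w * P = u * q' + X" unfolding X_def by simp
  have uq: "u * q' \<noteq> 0" "v (u * q') = aa (i+1)" using u q'0 v_mult[OF u(2) q'0] vq' by auto
  have "X = 0 \<or> v (u * q') < v X"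
  proof (cases "X = 0")
    case False
    then have "aa (i+2) \<le> v X" using XI I_iff by auto
    moreover have "aa (i+1) < aa (i+2)" using a_less_iff by simp
    ultimately show ?thesis using uq by simp
  qed simp
  then have vwP: "v (w * P) = aa (i+1)" using v_strict[OF uq(1)] wP uq by simp
  have g'eq: "g' = w * P / q'" unfolding g'_def X_def using q'0 by (simp add: field_simps)
  have g'0: "g' \<noteq> 0" using g'eq w P q'0 by simp
  have vg': "v g' = 0" using g'eq v_divide[of "w * P" q'] w P q'0 vwP vq' by simp
  have a2: "\<exists>t\<in>I (i+2). x1 * x2 = P * t" if x1: "x1 \<in> I (i+2)" and x2: "x2 \<in> I (i+2)" for x1 x2
  proof -
    have A: "(x2 / q') * (w * x1) \<in> I (i+3)" using hyp2'[OF I_mono[OF _ x2] wx[OF x1]] by simp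
    have B: "inverse g' * ((x2 / q') * (w * x1)) \<in> I (i+3)" using inv_closed_I[OF g'F g'0 vg' A] .
    have "x1 * x2 = P * (inverse g' * ((x2 / q') * (w * x1)))"
      using g'eq w P q'0 by (simp add: field_simps)
    moreover have "inverse g' * ((x2 / q') * (w * x1)) \<in> I (i+2)" using B I_mono[of "i+2" "i+3"] by simp
    ultimately show ?thesis by blast
  qed
  have main: "\<forall>y1\<in>I i. \<forall>x2\<in>I (i+2). \<exists>t\<in>I (i+2). y1 * x2 = P * t"
  proof (intro ballI)
    fix y1 x2 assume y1: "y1 \<in> I i" and x2: "x2 \<in> I (i+2)"
    obtain r where r: "r \<in> R" "y1 - r * P \<in> I (Suc i)" using decomp[OF P y1] by blast
    obtain r' where r': "r' \<in> R" "y1 - r * P - r' * q' \<in> I (Suc (Suc i))"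
      using decomp[OF q'R q'0 _ r(2)] vq' by auto
    define z where "z = y1 - r * P - r' * q'"
    have zI: "z \<in> I (i+2)" using r' z_def by simp
    obtain t1 where t1: "t1 \<in> I (i+2)" "X * x2 = P * t1" using a2[OF XI x2] by blast
    obtain t2 where t2: "t2 \<in> I (i+2)" "z * x2 = P * t2" using a2[OF zI x2] by blast
    define ui where "ui = inverse u"
    have uiR: "ui \<in> R" unfolding ui_def using unit_inverse u by blast
    have uui: "u * ui = 1" unfolding ui_def using u by simp
    define TT where "TT = r * x2 + r' * ui * (w * x2) - r' * ui * t1 + t2"
    have wx2: "w * x2 \<in> I (i+2)" using wx[OF x2] I_mono[of "i+2" "i+3"] by auto
    have TTI: "TT \<in> I (i+2)"
    proof -
      have "r * x2 \<in> I (i+2)" using I_mult r(1) x2 by blast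
      moreover have "r' * ui * (w * x2) \<in> I (i+2)" using I_mult[OF Rmult[OF r'(1) uiR] wx2] .
      moreover have "r' * ui * t1 \<in> I (i+2)" using I_mult[OF Rmult[OF r'(1) uiR] t1(1)] .
      ultimately show ?thesis unfolding TT_def using t2(1) by (intro I_add I_diff)
    qed
    have y1eq: "y1 = r * P + r' * q' + z" unfolding z_def by simp
    have "P * TT = r * P * x2 + r' * ui * (w * P * x2 - P * t1) + P * t2"
      unfolding TT_def by (simp add: algebra_simps)
    also have "\<dots> = r * P * x2 + r' * ui * (w * P * x2 - X * x2) + z * x2" using t1 t2 by simp
    also have "w * P * x2 - X * x2 = u * q' * x2" unfolding X_def by (simp add: algebra_simps)
    also have "r' * ui * (u * q' * x2) = r' * q' * x2"
      using uui by (metis mult.assoc mult.commute mult_1)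
    finally have "P * TT = y1 * x2" using y1eq by (simp add: algebra_simps)
    then show "\<exists>t\<in>I (i+2). y1 * x2 = P * t" using TTI by (intro bexI[of _ TT]) simp_all
  qed
  show False using no_q[OF q_indep[OF P main]] .
qed

end



context main
begin

lemma a_lt1: "aa i < aa (i+1)" using a_less_iff by simp
lemma a_lt2: "aa (i+1) < aa (i+2)" using a_less_iff by simp

lemma part2:
  assumes al: "\<alpha> \<in> R" and be: "\<beta> \<in> R" and nm: "\<alpha> - \<beta> \<notin> maxideal R"
    and sub: "plus_principal R (q + \<beta> * q') (I (i+2)) \<subseteq> plus_principal R (q + \<alpha> * q') (I (i+2))"
  shows False
proof -
  have "q + \<beta> * q' \<in> plus_principal R (q + \<beta> * q') (I (i+2))"
    unfolding plus_principal_def by (intro CollectI exI[of _ 1] exI[of _ 0]) auto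
  then have "q + \<beta> * q' \<in> plus_principal R (q + \<alpha> * q') (I (i+2))" using sub by blast
  then obtain r x where rx: "r \<in> R" "x \<in> I (i+2)" "q + \<beta> * q' = r * (q + \<alpha> * q') + x"
    unfolding plus_principal_def by blast
  define s where "s = r - 1"
  have sR: "s \<in> R" unfolding s_def using rx by auto
  define u where "u = \<beta> - \<alpha> - s * \<alpha>"
  have uR: "u \<in> R" unfolding u_def using sR al be by auto
  have xeq: "x = - (s * q) + u * q'"
  proof -
    have "x = q + \<beta> * q' - r * (q + \<alpha> * q')" using rx(3) by simp
    also have "\<dots> = - (s * q) + u * q'" unfolding s_def u_def by (simp add: algebra_simps)
    finally show ?thesis .
  qed
  have xv: "x = 0 \<or> aa (i+2) \<le> v x" using rx(2) I_iff by auto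
  show False
  proof (cases "s \<in> maxideal R")
    case False
    then have s0: "s \<noteq> 0" "v s = 0" using sR v_R[OF sR] by (auto simp: maxideal_iff)
    have A1: "- (s * q) \<noteq> 0" "v (- (s * q)) = aa i" using s0 q0 v_mult[OF s0(1) q0] vq by auto
    have "u * q' = 0 \<or> v (- (s * q)) < v (u * q')"
    proof (cases "u = 0")
      case False
      then have "v (u * q') = v u + aa (i+1)" using v_mult[OF False q'0] vq' by simp
      moreover have "0 \<le> v u" using v_R[OF uR False] .
      ultimately show ?thesis using A1 a_lt1 by simp
    qed simp
    from v_strict[OF A1(1) this] have "x \<noteq> 0" "v x = aa i" using xeq A1 by auto
    then show False using xv a_lt1 a_lt2 by simp
  next
    case True
    then have sm: "s = 0 \<or> 0 < v s" by (simp add: maxideal_iff)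
    have ab: "\<alpha> - \<beta> \<in> R" using al be by auto
    then have ab0: "\<alpha> - \<beta> \<noteq> 0" "v (\<alpha> - \<beta>) = 0" using nm v_R[OF ab] by (auto simp: maxideal_iff)
    have d: "\<beta> - \<alpha> \<noteq> 0" "v (\<beta> - \<alpha>) = 0" using ab0 v_minus[of "\<alpha> - \<beta>"] by auto
    have "- (s * \<alpha>) = 0 \<or> v (\<beta> - \<alpha>) < v (- (s * \<alpha>))"
    proof (cases "s = 0 \<or> \<alpha> = 0")
      case False
      then have "v (s * \<alpha>) = v s + v \<alpha>" using v_mult by auto
      moreover have "0 \<le> v \<alpha>" using v_R al False by auto
      ultimately show ?thesis using sm False d by simp
    qed auto
    from v_strict[OF d(1) this] have u0: "u \<noteq> 0" "v u = 0" unfolding u_def using d by auto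
    have xI: "s * q - u * q' \<in> I (i+2)" using I_minus[OF rx(2)] xeq by simp
    show False
    proof (cases "s = 0")
      case True
      then have "x = u * q'" using xeq by simp
      moreover have "v (u * q') = aa (i+1)" using v_mult[OF u0(1) q'0] u0 vq' by simp
      moreover have "u * q' \<noteq> 0" using u0 q'0 by simp
      ultimately show False using xv a_lt2 by simp
    next
      case False
      then have vs: "0 < v s" using sm by simp
      have "\<forall>x\<in>I (i+2). s * x \<in> R" using sR I_R by auto
      then show False using keyL[OF qR q0 vq False vs _ uR u0 xI] by simp
    qed
  qed
qed

abbreviation "JJ p \<equiv> plus_principal R p (I (i+2))"

lemma J_iff: "x \<in> JJ p \<longleftrightarrow> (\<exists>r y. x = r * p + y \<and> r \<in> R \<and> y \<in> I (i+2))"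
  unfolding plus_principal_def by blast

lemma J_R: "p \<in> R \<Longrightarrow> x \<in> JJ p \<Longrightarrow> x \<in> R"
  using J_iff I_R by auto

lemma J_I: "y \<in> I (i+2) \<Longrightarrow> y \<in> JJ p"
  using J_iff[of y p] by (intro iffD2[OF J_iff]) (rule exI[of _ 0], auto)

lemma J_0: "0 \<in> JJ p" using J_I I_0 by blast

lemma J_p: "p \<in> JJ p"
  by (rule iffD2[OF J_iff]) (rule exI[of _ 1], rule exI[of _ 0], auto)

lemma J_add: assumes "x \<in> JJ p" "x' \<in> JJ p" shows "x + x' \<in> JJ p"
proof -
  obtain r y r' y' where "x = r * p + y" "r \<in> R" "y \<in> I (i+2)" "x' = r' * p + y'" "r' \<in> R" "y' \<in> I (i+2)"
    using assms J_iff by meson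
  then show ?thesis using I_add
    by (intro iffD2[OF J_iff] exI[of _ "r + r'"] exI[of _ "y + y'"]) (auto simp: algebra_simps)
qed

lemma J_mult: assumes "c \<in> R" "x \<in> JJ p" shows "c * x \<in> JJ p"
proof -
  obtain r y where "x = r * p + y" "r \<in> R" "y \<in> I (i+2)"
    using assms J_iff by meson
  then show ?thesis using I_mult assms(1)
    by (intro iffD2[OF J_iff] exI[of _ "c * r"] exI[of _ "c * y"]) (auto simp: algebra_simps)
qed

lemma J_minus: "x \<in> JJ p \<Longrightarrow> - x \<in> JJ p"
  using J_mult[of "-1" x p] Rminus[OF R1] by simp

lemma p_facts: assumes "\<alpha> \<in> R" shows "q + \<alpha> * q' \<in> R" "q + \<alpha> * q' \<noteq> 0" "v (q + \<alpha> * q') = aa i"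
proof -
  show "q + \<alpha> * q' \<in> R" using assms qR q'R by auto
  have "\<alpha> * q' = 0 \<or> v q < v (\<alpha> * q')"
  proof (cases "\<alpha> = 0")
    case False
    then have "v (\<alpha> * q') = v \<alpha> + aa (i+1)" using v_mult[OF False q'0] vq' by simp
    moreover have "0 \<le> v \<alpha>" using v_R assms False by auto
    ultimately show ?thesis using vq a_lt1 by simp
  qed simp
  from v_strict[OF q0 this] show "q + \<alpha> * q' \<noteq> 0" "v (q + \<alpha> * q') = aa i" using vq by auto
qed

lemma trace_claim:
  assumes al: "\<alpha> \<in> R" and yJ: "\<forall>x\<in>JJ (q + \<alpha> * q'). y * x \<in> R"
  shows "\<forall>x\<in>JJ (q + \<alpha> * q'). y * x \<in> JJ (q + \<alpha> * q')"
proof -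
  define p where "p = q + \<alpha> * q'"
  have p: "p \<in> R" "p \<noteq> 0" "v p = aa i" using p_facts[OF al] p_def by auto
  have yJ': "\<forall>x\<in>JJ p. y * x \<in> R" using yJ p_def by simp
  have ypR: "y * p \<in> R" using yJ' J_p by blast
  have yI: "y * x \<in> R" if "x \<in> I (i+2)" for x using yJ' J_I that by blast
  have nn_pos: "0 < nn" using n4 by simp
  have i2nn: "i + 2 \<le> nn" using i2 n4 by simp
  have "\<forall>x\<in>JJ p. y * x \<in> JJ p"
  proof (cases "y = 0")
    case True then show ?thesis using J_0 by simp
  next
    case y0: False
    show ?thesis
    proof (cases "v y < 0")
      case True
      define m where "m = aa nn - 1 - v y"
      have "m \<in> S" using big_S[of m] True m_def by simp
      then obtain x where x: "x \<in> R" "x \<noteq> 0" "v x = m" using S_iff by blast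
      have "aa (i+2) \<le> aa nn" using a_le_iff i2nn by simp
      then have xI: "x \<in> I (i+2)" using x I_iff True m_def by auto
      have "y * x \<in> R" "y * x \<noteq> 0" using yI[OF xI] y0 x by auto
      then have "v (y * x) \<in> S" using vR_S by blast
      moreover have "v (y * x) = aa nn - 1" using v_mult[OF y0 x(2)] x m_def by simp
      ultimately show ?thesis using cond_min[OF nn_pos] by simp
    next
      case False
      then have "y \<in> int_closure R" using Rbar_iff by simp
      then obtain r0 where r0: "r0 \<in> R" "y - r0 \<in> val_maxideal v"
        using residue unfolding residue_iso_def by blast
      define w where "w = y - r0"
      have wJ: "w * x \<in> R" if "x \<in> JJ p" for x
      proof -
        have "w * x = y * x - r0 * x" unfolding w_def by (simp add: algebra_simps)
        then show ?thesis using yJ' that r0 J_R[OF p(1)] by auto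
      qed
      have wJJ: "w * x \<in> JJ p" if xJ: "x \<in> JJ p" for x
      proof (cases "w = 0")
        case True then show ?thesis using J_0 by simp
      next
        case w0: False
        then have vw: "0 < v w" using r0(2) w_def unfolding val_maxideal_def by simp
        have wI: "w * z \<in> I (i+2)" if z: "z \<in> I (i+2)" for z
        proof (cases "z = 0")
          case False
          have "w * z \<in> R" using wJ J_I z by blast
          moreover have "v (w * z) = v w + v z" using v_mult[OF w0 False] .
          ultimately show ?thesis using z False vw I_iff by auto
        qed simp
        have wpJ: "w * p \<in> JJ p"
        proof -
          have wpR: "w * p \<in> R" using wJ J_p by blast
          have wp0: "w * p \<noteq> 0" using w0 p by simp
          have "v (w * p) = v w + aa i" using v_mult[OF w0 p(2)] p by simp
          then have "aa i < v (w * p)" using vw by simp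
          then have wpI: "w * p \<in> I (i+1)" using I_gt[OF wpR wp0] by simp
          obtain u where u: "u \<in> R" "w * p - u * q' \<in> I (Suc (i+1))"
            using decomp[OF q'R q'0 vq' wpI] by blast
          show ?thesis
          proof (cases "u \<in> maxideal R")
            case True
            have uq: "u * q' \<in> I (i+2)"
            proof (cases "u = 0")
              case False
              then have "0 < v u" using True by (simp add: maxideal_iff)
              then have "aa (i+1) < v (u * q')" using v_mult[OF False q'0] vq' by simp
              then show ?thesis using I_gt[of "u * q'" "i+1"] u q'R False q'0 by auto
            qed simp
            then have "w * p \<in> I (i+2)" using I_add[OF _ uq, of "w * p - u * q'"] u by simp
            then show ?thesis using J_I by blast
          next
            case False
            then have u0: "u \<noteq> 0" "v u = 0" using u v_R[OF u(1)] by (auto simp: maxideal_iff)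
            have "\<forall>x\<in>I (i+2). w * x \<in> R" using wJ J_I by blast
            then show ?thesis using keyL[OF p w0 vw _ u(1) u0] u(2) by simp
          qed
        qed
        obtain r z where rz: "x = r * p + z" "r \<in> R" "z \<in> I (i+2)" using xJ J_iff by meson
        have "w * x = r * (w * p) + w * z" using rz by (simp add: algebra_simps)
        then show ?thesis using J_add J_mult[OF rz(2) wpJ] J_I[OF wI[OF rz(3)]] by simp
      qed
      show ?thesis
      proof
        fix x assume xJ: "x \<in> JJ p"
        have "y * x = r0 * x + w * x" unfolding w_def by (simp add: algebra_simps)
        then show "y * x \<in> JJ p" using J_add J_mult[OF r0(1) xJ] wJJ[OF xJ] by simp
      qed
    qed
  qed
  then show ?thesis using p_def by simp
qed

lemma cring_R: "cring (ringR R)"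
proof (rule cringI)
  show "abelian_group (ringR R)"
  proof (rule abelian_groupI)
    fix x assume "x \<in> carrier (ringR R)"
    then show "\<exists>y\<in>carrier (ringR R). y \<oplus>\<^bsub>ringR R\<^esub> x = \<zero>\<^bsub>ringR R\<^esub>"
      unfolding ringR_def by (intro bexI[of _ "- x"]) auto
  qed (auto simp: ringR_def algebra_simps)
  show "comm_monoid (ringR R)"
    by (rule comm_monoidI) (auto simp: ringR_def algebra_simps)
qed (auto simp: ringR_def algebra_simps)

definition MM :: "'a \<Rightarrow> ('a, 'a) module" where
  "MM p = \<lparr>carrier = JJ p, mult = (*), one = 1, zero = 0, add = (+), smult = (*)\<rparr>"

lemma module_J: "module (ringR R) (MM p)"
proof (rule moduleI)
  show "cring (ringR R)" by (rule cring_R)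
  show "abelian_group (MM p)"
  proof (rule abelian_groupI)
    fix x assume "x \<in> carrier (MM p)"
    then show "\<exists>y\<in>carrier (MM p). y \<oplus>\<^bsub>MM p\<^esub> x = \<zero>\<^bsub>MM p\<^esub>"
      unfolding MM_def using J_minus by (intro bexI[of _ "- x"]) auto
  qed (auto simp: MM_def algebra_simps J_add[simplified] J_0[simplified])
qed (auto simp: MM_def ringR_def algebra_simps J_mult[simplified])

lemma lin_form:
  assumes pR: "p \<in> R" "p \<noteq> 0" and f: "lin_to_R R (MM p) f" and x: "x \<in> JJ p"
  shows "f x = (f p / p) * x"
proof -
  have pJ: "p \<in> carrier (MM p)" using J_p by (simp add: MM_def)
  have xJ: "x \<in> carrier (MM p)" using x by (simp add: MM_def)
  have xR: "x \<in> R" using J_R[OF pR(1) x] .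
  have "f (p * x) = p * f x" using f pR xJ unfolding lin_to_R_def by (simp add: MM_def)
  moreover have "f (x * p) = x * f p" using f xR pJ unfolding lin_to_R_def by (simp add: MM_def)
  ultimately have "p * f x = x * f p" by (simp add: mult.commute)
  then show ?thesis using pR(2) by (simp add: field_simps)
qed

lemma trace_J: assumes al: "\<alpha> \<in> R"
  shows "trace_of R (MM (q + \<alpha> * q')) = JJ (q + \<alpha> * q')"
proof -
  define p where "p = q + \<alpha> * q'"
  have p: "p \<in> R" "p \<noteq> 0" using p_facts[OF al] p_def by auto
  have "trace_of R (MM p) = JJ p"
  proof
    show "trace_of R (MM p) \<subseteq> JJ p"
    proof
      fix t assume "t \<in> trace_of R (MM p)"
      then obtain N :: nat and f xs where fx: "\<forall>k<N. lin_to_R R (MM p) (f k) \<and> xs k \<in> carrier (MM p)"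
        "t = (\<Sum>k<N. f k (xs k))" unfolding trace_of_def by blast
      have each: "f k (xs k) \<in> JJ p" if k: "k < N" for k
      proof -
        have lin: "lin_to_R R (MM p) (f k)" and xk: "xs k \<in> JJ p" using fx k by (auto simp: MM_def)
        have yJ: "\<forall>x\<in>JJ p. (f k p / p) * x \<in> R"
        proof
          fix x assume x: "x \<in> JJ p"
          have "f k x \<in> R" using lin x unfolding lin_to_R_def by (simp add: MM_def)
          then show "(f k p / p) * x \<in> R" using lin_form[OF p lin x] by simp
        qed
        have tc: "\<forall>x\<in>JJ p. y * x \<in> JJ p" if "\<forall>x\<in>JJ p. y * x \<in> R" for y
          using trace_claim[OF al, of y] that unfolding p_def by blast
        have "(f k p / p) * xs k \<in> JJ p" using bspec[OF tc[OF yJ] xk] .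
        then show ?thesis using lin_form[OF p lin xk] by simp
      qed
      have "(\<Sum>k<M. f k (xs k)) \<in> JJ p" if "M \<le> N" for M
        using that
      proof (induct M)
        case 0 then show ?case using J_0 by simp
      next
        case (Suc M)
        then have "(\<Sum>k<M. f k (xs k)) \<in> JJ p" "f M (xs M) \<in> JJ p" using each by auto
        then show ?case using J_add by simp
      qed
      then show "t \<in> JJ p" using fx by simp
    qed
    show "JJ p \<subseteq> trace_of R (MM p)"
    proof
      fix t assume t: "t \<in> JJ p"
      have lin: "lin_to_R R (MM p) (\<lambda>x. x)" unfolding lin_to_R_def using J_R[OF p(1)] by (auto simp: MM_def)
      show "t \<in> trace_of R (MM p)" unfolding trace_of_def
        using lin t by (intro CollectI exI[of _ "1::nat"] exI[of _ "\<lambda>_ x. x"] exI[of _ "\<lambda>_. t"]) (auto simp: MM_def)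
    qed
  qed
  then show ?thesis using p_def by simp
qed

lemma part1: assumes al: "\<alpha> \<in> R" shows "JJ (q + \<alpha> * q') \<in> trace_ideals R"
proof -
  have "is_trace_ideal TYPE('a) R (JJ (q + \<alpha> * q'))"
    unfolding is_trace_ideal_def using module_J trace_J[OF al] by metis
  moreover have "JJ (q + \<alpha> * q') \<noteq> {0}" using J_p p_facts[OF al] by blast
  ultimately show ?thesis unfolding trace_ideals_def by simp
qed

lemma part3: assumes inf: "infinite (residue_field R)" shows "infinite (trace_ideals R)"
proof
  assume fin: "finite (trace_ideals R)"
  define Jf where "Jf a = JJ (q + a * q')" for a
  define cls where "cls r = {s \<in> R. r - s \<in> maxideal R}" for r
  have "Jf ` R \<subseteq> trace_ideals R" using part1 Jf_def by auto
  then have finJ: "finite (Jf ` R)" using fin finite_subset by blast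
  have cls_eq: "cls a = cls b" if ab: "a \<in> R" "b \<in> R" "Jf a = Jf b" for a b
  proof -
    have "a - b \<in> maxideal R" using part2[OF ab(1,2)] ab(3) Jf_def by auto
    moreover have "b - a \<in> maxideal R" using maxideal_diff[OF _ calculation, of 0] by (simp add: maxideal_iff)
    ultimately have m1: "a - b \<in> maxideal R" and m2: "b - a \<in> maxideal R" by auto
    have "a - s \<in> maxideal R \<longleftrightarrow> b - s \<in> maxideal R" for s
    proof
      assume "a - s \<in> maxideal R"
      from maxideal_diff[OF this m1] show "b - s \<in> maxideal R" by simp
    next
      assume "b - s \<in> maxideal R"
      from maxideal_diff[OF this m2] show "a - s \<in> maxideal R" by simp
    qed
    then show ?thesis unfolding cls_def by blast
  qed
  define h where "h X = cls (SOME a. a \<in> R \<and> Jf a = X)" for X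
  have "cls ` R = h ` (Jf ` R)"
  proof
    show "cls ` R \<subseteq> h ` Jf ` R"
    proof
      fix c assume "c \<in> cls ` R"
      then obtain a where a: "a \<in> R" "c = cls a" by blast
      have ex: "\<exists>b. b \<in> R \<and> Jf b = Jf a" using a by blast
      have "h (Jf a) = cls a" unfolding h_def using someI_ex[OF ex] cls_eq a by metis
      then show "c \<in> h ` Jf ` R" using a by auto
    qed
    show "h ` Jf ` R \<subseteq> cls ` R"
    proof
      fix c assume "c \<in> h ` Jf ` R"
      then obtain a where a: "a \<in> R" "c = h (Jf a)" by blast
      have ex: "\<exists>b. b \<in> R \<and> Jf b = Jf a" using a by blast
      then show "c \<in> cls ` R" unfolding a(2) h_def using someI_ex[OF ex] by blast
    qed
  qed
  then have "finite (cls ` R)" using finJ by simp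
  moreover have "residue_field R = cls ` R" unfolding residue_field_def cls_def by simp
  ultimately show False using inf by simp
qed

end

theorem proposition3p6:
  fixes R :: "'k::field set" and v :: "'k \<Rightarrow> int" and i :: nat and q q' :: 'k
  assumes subring: "is_subring R"
    and fracfield: "is_frac_field_of R"
    and fingen: "fin_gen_over R (int_closure R)"
    and val: "normalized_valuation_of (int_closure R) v"
    and residue: "residue_iso R v"
    and n4: "cond_index R v \<ge> 4"
    and i1: "1 \<le> i" and i2: "i \<le> cond_index R v - 3"
    and qR: "q \<in> R" and q0: "q \<noteq> 0" and vq: "v q = aseq R v i"
    and q'R: "q' \<in> R" and q'0: "q' \<noteq> 0" and vq': "v q' = aseq R v (i + 1)"
    and hyp1: "ideal_prod (Iideal R v i) (Iideal R v (i + 2)) \<noteq> elt_times q (Iideal R v (i + 2))"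
    and hyp2: "ideal_prod (Iideal R v (i + 1)) (Iideal R v (i + 3)) = elt_times q' (Iideal R v (i + 3))"
  shows "(\<forall>\<alpha>\<in>R. plus_principal R (q + \<alpha> * q') (Iideal R v (i + 2)) \<in> trace_ideals R)
       \<and> (\<forall>\<alpha>\<in>R. \<forall>\<beta>\<in>R. \<alpha> - \<beta> \<notin> maxideal R \<longrightarrow>
            \<not> (plus_principal R (q + \<beta> * q') (Iideal R v (i + 2))
                 \<subseteq> plus_principal R (q + \<alpha> * q') (Iideal R v (i + 2))))
       \<and> (infinite (residue_field R) \<longrightarrow> infinite (trace_ideals R))"
proof -
  have M: "main R v i q q'"
    unfolding main_def main_axioms_def setting_def
    using subring fracfield fingen val residue n4 i1 i2 qR q0 vq q'R q'0 vq' hyp1 hyp2 by blast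
  interpret main R v i q q' by (rule M)
  show ?thesis using part1 part2 part3 by blast
qed

end
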